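(* Let $\mathcal{S}$ be a state space and let $\mathsf{M}^{(1)},\mathsf{M}^{(2)}$ be measurements on $\mathcal{S}$ with $m_1$ and $m_2$ outcomes respectively. If $$\lambda_{max}(\mathsf{H}^{(1,2)})>\frac{\lambda_{max}(\mathcal{S})+m_1m_2}{m_1+m_2},$$ then $\mathsf{M}^{(1)}$ and $\mathsf{M}^{(2)}$ are incompatible.
   Context: General probabilistic theory setting: a state space $\mathcal{S}$ is a compact convex subset of a finite-dimensional real vector space, embedded as a base of a closed generating proper cone in a vector space $V$, with unit effect $u$. Effects are linear functionals $e$ on $V$ with $0\le e\le1$ on $\mathcal{S}$; $\|f\|=\max_{s\in\mathcal{S}}|f(s)|$. A measurement with finite outcome set $\Omega$ is a map $x\mapsto\mathsf{M}_x$ to effects with $\sum_x\mathsf{M}_x=u$; its decoding power is $\lambda_{max}(\mathsf{M})=\sum_x\|\mathsf{M}_x\|$, and $\lambda_{max}(\mathcal{S})$ is the supremum of $\lambda_{max}(\mathsf{M})$ over all measurements on $\mathcal{S}$ with finite outcome sets. $\mathsf{M}^{(1)}$ (outcomes $\Omega_1$) and $\mathsf{M}^{(2)}$ (outcomes $\Omega_2$) are compatible if there is a measurement $\mathsf{J}$ with outcome set $\Omega_1\times\Omega_2$ with $\sum_y\mathsf{J}_{x,y}=\mathsf{M}^{(1)}_x$ and $\sum_x\mathsf{J}_{x,y}=\mathsf{M}^{(2)}_y$, and incompatible otherwise. The harmonic approximate joint measurement $\mathsf{H}^{(1,2)}$ has outcome set $\Omega_1\times\Omega_2$ and effects $\mathsf{H}^{(1,2)}_{x,y}=\frac{1}{m_1+m_2}(\mathsf{M}^{(1)}_x+\mathsf{M}^{(2)}_y)$.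 *)

theory Defs
  imports "HOL-Analysis.Analysis"
begin

text \<open>A state space: a nonempty compact convex subset S of a finite-dimensional real
vector space V (type 'a), which is a base of the cone it generates: there is a linear
unit functional u with u = 1 on S, and S spans V (the cone is generating).
The cone generated by S is then closed and proper automatically.\<close>
definition state_space :: "'a::euclidean_space set \<Rightarrow> ('a \<Rightarrow> real) \<Rightarrow> bool" where
  "state_space S u \<longleftrightarrow> S \<noteq> {} \<and> compact S \<and> convex S \<and> linear u \<and>
     (\<forall>s\<in>S. u s = 1) \<and> span S = UNIV"

definition effect :: "'a::euclidean_space set \<Rightarrow> ('a \<Rightarrow> real) \<Rightarrow> bool" where
  "effect S e \<longleftrightarrow> linear e \<and> (\<forall>s\<in>S. 0 \<le> e s \<and> e s \<le> 1)"

definition fnorm :: "'a::euclidean_space set \<Rightarrow> ('a \<Rightarrow> real) \<Rightarrow> real" where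
  "fnorm S f = (SUP s\<in>S. \<bar>f s\<bar>)"

definition measurement ::
  "'a::euclidean_space set \<Rightarrow> ('a \<Rightarrow> real) \<Rightarrow> 'b set \<Rightarrow> ('b \<Rightarrow> 'a \<Rightarrow> real) \<Rightarrow> bool" where
  "measurement S u \<Omega> M \<longleftrightarrow> finite \<Omega> \<and> (\<forall>x\<in>\<Omega>. effect S (M x)) \<and>
     (\<lambda>v. \<Sum>x\<in>\<Omega>. M x v) = u"

definition decoding_power ::
  "'a::euclidean_space set \<Rightarrow> 'b set \<Rightarrow> ('b \<Rightarrow> 'a \<Rightarrow> real) \<Rightarrow> real" where
  "decoding_power S \<Omega> M = (\<Sum>x\<in>\<Omega>. fnorm S (M x))"

text \<open>Decoding power of the state space: supremum over all measurements with finite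
outcome sets (outcome labels taken from nat, which loses no generality).\<close>
definition decoding_power_space :: "'a::euclidean_space set \<Rightarrow> ('a \<Rightarrow> real) \<Rightarrow> real" where
  "decoding_power_space S u =
     (SUP p\<in>{(\<Omega>::nat set, M). measurement S u \<Omega> M}. decoding_power S (fst p) (snd p))"

definition compatible ::
  "'a::euclidean_space set \<Rightarrow> ('a \<Rightarrow> real) \<Rightarrow> 'b set \<Rightarrow> ('b \<Rightarrow> 'a \<Rightarrow> real)
    \<Rightarrow> 'c set \<Rightarrow> ('c \<Rightarrow> 'a \<Rightarrow> real) \<Rightarrow> bool" where
  "compatible S u \<Omega>1 M1 \<Omega>2 M2 \<longleftrightarrow>
     (\<exists>J. measurement S u (\<Omega>1 \<times> \<Omega>2) J \<and>
          (\<forall>x\<in>\<Omega>1. (\<lambda>v. \<Sum>y\<in>\<Omega>2. J (x, y) v) = M1 x) \<and>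
          (\<forall>y\<in>\<Omega>2. (\<lambda>v. \<Sum>x\<in>\<Omega>1. J (x, y) v) = M2 y))"

definition harmonic ::
  "'b set \<Rightarrow> ('b \<Rightarrow> 'a \<Rightarrow> real) \<Rightarrow> 'c set \<Rightarrow> ('c \<Rightarrow> 'a \<Rightarrow> real) \<Rightarrow> ('b \<times> 'c \<Rightarrow> 'a \<Rightarrow> real)" where
  "harmonic \<Omega>1 M1 \<Omega>2 M2 = (\<lambda>(x, y) v. (M1 x v + M2 y v) / real (card \<Omega>1 + card \<Omega>2))"

end

theory Submission
  imports Defs
begin

lemma dp_bound:
  fixes S :: "'a::euclidean_space set" and u :: "'a \<Rightarrow> real"
  assumes ss: "state_space S u"
  shows "\<exists>C. \<forall>(\<Omega>::'b set) M. measurement S u \<Omega> M \<longrightarrow> decoding_power S \<Omega> M \<le> C"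
proof -
  have Sne: "S \<noteq> {}" and cS: "compact S" and lu: "linear u" and u1: "\<forall>s\<in>S. u s = 1"
    and spS: "span S = UNIV" using ss unfolding state_space_def by auto
  obtain B where BS: "B \<subseteq> S" and iB: "independent B" and SB: "S \<subseteq> span B"
    by (rule maximal_independent_subset)
  have spB: "span B = UNIV"
    using spS SB by (metis span_minimal subspace_span top.extremum_uniqueI)
  have fB: "finite B" using iB by (rule finiteI_independent)
  define c where "c b v = representation B v b" for b v
  have lc: "linear (c b)" for b
    unfolding c_def
    by (rule linearI) (simp_all add: real_vector.representation_add[OF iB] real_vector.representation_scale[OF iB] spB)
  have exD: "\<exists>D. \<forall>s\<in>S. \<bar>c b s\<bar> \<le> D" for b
  proof -
    have "bounded (c b ` S)"
      using bounded_linear_image[OF compact_imp_bounded[OF cS]] lc linear_conv_bounded_linear by blast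
    then show ?thesis unfolding bounded_real by auto
  qed
  define D where "D b = (SOME D. \<forall>s\<in>S. \<bar>c b s\<bar> \<le> D)" for b
  have D: "\<And>b s. s \<in> S \<Longrightarrow> \<bar>c b s\<bar> \<le> D b"
    unfolding D_def using someI_ex[OF exD] by blast
  have rep: "(\<Sum>b\<in>B. c b v *\<^sub>R b) = v" for v
  proof -
    have "v \<in> span B" using spB by simp
    then show ?thesis unfolding c_def by (rule real_vector.sum_representation_eq[OF iB _ fB order_refl])
  qed
  have eff: "fnorm S e \<le> (\<Sum>b\<in>B. D b * e b)" if "effect S e" for e
  proof -
    have le: "linear e" and e01: "\<And>s. s \<in> S \<Longrightarrow> 0 \<le> e s \<and> e s \<le> 1"
      using that unfolding effect_def by auto
    show ?thesis unfolding fnorm_def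
    proof (rule cSUP_least[OF Sne])
      fix s assume s: "s \<in> S"
      have "e s = e (\<Sum>b\<in>B. c b s *\<^sub>R b)" using rep by simp
      also have "\<dots> = (\<Sum>b\<in>B. c b s * e b)"
        using le by (simp add: linear_sum linear_scale)
      also have "\<dots> \<le> (\<Sum>b\<in>B. D b * e b)"
      proof (rule sum_mono)
        fix b assume "b \<in> B"
        then have "0 \<le> e b" using BS e01 by auto
        moreover have "c b s \<le> D b" using D[OF s, of b] by linarith
        ultimately show "c b s * e b \<le> D b * e b" by (simp add: mult_right_mono)
      qed
      finally show "\<bar>e s\<bar> \<le> (\<Sum>b\<in>B. D b * e b)" using e01[OF s] by simp
    qed
  qed
  show ?thesis
  proof (intro exI allI impI)
    fix \<Omega> :: "'b set" and M assume m: "measurement S u \<Omega> M"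
    then have fO: "finite \<Omega>" and eM: "\<And>x. x \<in> \<Omega> \<Longrightarrow> effect S (M x)"
      and sM: "(\<lambda>v. \<Sum>x\<in>\<Omega>. M x v) = u" unfolding measurement_def by auto
    have "decoding_power S \<Omega> M \<le> (\<Sum>x\<in>\<Omega>. \<Sum>b\<in>B. D b * M x b)"
      unfolding decoding_power_def using eff eM by (intro sum_mono) auto
    also have "\<dots> = (\<Sum>b\<in>B. \<Sum>x\<in>\<Omega>. D b * M x b)"
      by (rule sum.swap)
    also have "\<dots> = (\<Sum>b\<in>B. D b * (\<Sum>x\<in>\<Omega>. M x b))"
      by (simp add: sum_distrib_left)
    also have "\<dots> = (\<Sum>b\<in>B. D b * u b)" by (simp flip: sM)
    also have "\<dots> = (\<Sum>b\<in>B. D b)" using u1 BS by (intro sum.cong) auto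
    finally show "decoding_power S \<Omega> M \<le> (\<Sum>b\<in>B. D b)" .
  qed
qed

lemma effect_le_fnorm:
  assumes "effect S e" "s \<in> S"
  shows "e s \<le> fnorm S e"
proof -
  have b: "bdd_above ((\<lambda>s. \<bar>e s\<bar>) ` S)"
    using assms(1) unfolding effect_def by (intro bdd_aboveI2[of _ _ 1]) auto
  have "e s \<le> \<bar>e s\<bar>" by simp
  also have "\<dots> \<le> fnorm S e" unfolding fnorm_def by (rule cSUP_upper[OF assms(2) b])
  finally show ?thesis .
qed

lemma pair_bound:
  fixes S :: "'a::euclidean_space set" and u :: "'a \<Rightarrow> real"
    and \<Omega>1 :: "'b set" and M1 :: "'b \<Rightarrow> 'a \<Rightarrow> real"
    and \<Omega>2 :: "'c set" and M2 :: "'c \<Rightarrow> 'a \<Rightarrow> real"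
  assumes Sne: "S \<noteq> {}"
    and J: "measurement S u (\<Omega>1 \<times> \<Omega>2) J"
    and u1: "\<forall>s\<in>S. u s = 1"
    and J1: "\<forall>x\<in>\<Omega>1. (\<lambda>v. \<Sum>y\<in>\<Omega>2. J (x, y) v) = M1 x"
    and J2: "\<forall>y\<in>\<Omega>2. (\<lambda>v. \<Sum>x\<in>\<Omega>1. J (x, y) v) = M2 y"
    and fin1: "finite \<Omega>1" and fin2: "finite \<Omega>2"
    and x: "x \<in> \<Omega>1" and y: "y \<in> \<Omega>2"
    and m: "(m::real) > 0"
  shows "fnorm S (\<lambda>v. (M1 x v + M2 y v) / m) \<le> (fnorm S (J (x, y)) + 1) / m"
proof -
  define F where "F = fnorm S (J (x, y))"
  have "(SUP s\<in>S. \<bar>(M1 x s + M2 y s) / m\<bar>) \<le> (F + 1) / m"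
proof (rule cSUP_least[OF Sne])
  fix s assume s: "s \<in> S"
  have eJ: "\<And>p. p \<in> \<Omega>1 \<times> \<Omega>2 \<Longrightarrow> effect S (J p)" and sJ: "(\<lambda>v. \<Sum>p\<in>\<Omega>1 \<times> \<Omega>2. J p v) = u"
    using J unfolding measurement_def by auto
  have nn: "\<And>p. p \<in> \<Omega>1 \<times> \<Omega>2 \<Longrightarrow> 0 \<le> J p s" using eJ s unfolding effect_def by auto
  define A where "A = {x} \<times> \<Omega>2"
  define B where "B = \<Omega>1 \<times> {y}"
  have AB: "A \<inter> B = {(x, y)}" using x y unfolding A_def B_def by auto
  have fA: "finite A" "finite B" using fin1 fin2 unfolding A_def B_def by auto
  have m1: "M1 x s = (\<Sum>p\<in>A. J p s)"
  proof -
    have "M1 x s = (\<Sum>y'\<in>\<Omega>2. J (x, y') s)" using fun_cong[OF J1[rule_format, OF x], of s] by simp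
    also have "\<dots> = (\<Sum>p\<in>A. J p s)" unfolding A_def
      using sum.cartesian_product[where g="\<lambda>a b. J (a, b) s" and A="{x}" and B=\<Omega>2] by simp
    finally show ?thesis .
  qed
  have m2: "M2 y s = (\<Sum>p\<in>B. J p s)"
  proof -
    have "M2 y s = (\<Sum>x'\<in>\<Omega>1. J (x', y) s)" using fun_cong[OF J2[rule_format, OF y], of s] by simp
    also have "\<dots> = (\<Sum>p\<in>B. J p s)" unfolding B_def
      using sum.cartesian_product[where g="\<lambda>a b. J (a, b) s" and A=\<Omega>1 and B="{y}"] by simp
    finally show ?thesis .
  qed
  have ABsub: "A \<union> B \<subseteq> \<Omega>1 \<times> \<Omega>2" using x y unfolding A_def B_def by auto
  have "(\<Sum>p\<in>A \<union> B. J p s) = M1 x s + M2 y s - J (x, y) s"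
    using sum_Un[OF fA, of "\<lambda>p. J p s"] m1 m2 AB by simp
  moreover have "(\<Sum>p\<in>A \<union> B. J p s) \<le> (\<Sum>p\<in>\<Omega>1 \<times> \<Omega>2. J p s)"
    by (rule sum_mono2) (use fin1 fin2 ABsub nn in auto)
  moreover have "(\<Sum>p\<in>\<Omega>1 \<times> \<Omega>2. J p s) = 1" using fun_cong[OF sJ, of s] u1 s by simp
  moreover have "0 \<le> (\<Sum>p\<in>A \<union> B. J p s)" using ABsub nn by (intro sum_nonneg) auto
  moreover have "J (x, y) s \<le> F"
    unfolding F_def using effect_le_fnorm[OF eJ s] x y by auto
  moreover have "0 \<le> J (x, y) s" using nn x y by auto
  ultimately have "\<bar>M1 x s + M2 y s\<bar> \<le> F + 1" by linarith
  then show "\<bar>(M1 x s + M2 y s) / m\<bar> \<le> (F + 1) / m"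
    using m by (simp add: abs_divide divide_right_mono)
qed
  then show ?thesis unfolding fnorm_def F_def by simp
qed

theorem corollary1:
  fixes S :: "'a::euclidean_space set" and u :: "'a \<Rightarrow> real"
    and \<Omega>1 :: "'b set" and M1 :: "'b \<Rightarrow> 'a \<Rightarrow> real"
    and \<Omega>2 :: "'c set" and M2 :: "'c \<Rightarrow> 'a \<Rightarrow> real"
  assumes "state_space S u"
    and "measurement S u \<Omega>1 M1"
    and "measurement S u \<Omega>2 M2"
    and "decoding_power S (\<Omega>1 \<times> \<Omega>2) (harmonic \<Omega>1 M1 \<Omega>2 M2)
           > (decoding_power_space S u + real (card \<Omega>1) * real (card \<Omega>2))
             / (real (card \<Omega>1) + real (card \<Omega>2))"
  shows "\<not> compatible S u \<Omega>1 M1 \<Omega>2 M2"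
proof
  assume "compatible S u \<Omega>1 M1 \<Omega>2 M2"
  then obtain J where J: "measurement S u (\<Omega>1 \<times> \<Omega>2) J"
    and J1: "\<forall>x\<in>\<Omega>1. (\<lambda>v. \<Sum>y\<in>\<Omega>2. J (x, y) v) = M1 x"
    and J2: "\<forall>y\<in>\<Omega>2. (\<lambda>v. \<Sum>x\<in>\<Omega>1. J (x, y) v) = M2 y"
    unfolding compatible_def by blast
  have Sne: "S \<noteq> {}" and u1: "\<forall>s\<in>S. u s = 1"
    using assms(1) unfolding state_space_def by auto
  have fin1: "finite \<Omega>1" and fin2: "finite \<Omega>2" and sM1: "(\<lambda>v. \<Sum>x\<in>\<Omega>1. M1 x v) = u"
    using assms(2,3) unfolding measurement_def by auto
  have ne1: "\<Omega>1 \<noteq> {}"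
  proof
    assume "\<Omega>1 = {}"
    then have "u = (\<lambda>v. 0)" using sM1 by auto
    moreover obtain s where "s \<in> S" using Sne by auto
    ultimately show False using u1 by auto
  qed
  define m where "m = real (card \<Omega>1) + real (card \<Omega>2)"
  have mpos: "m > 0" unfolding m_def using ne1 fin1 by (simp add: add_pos_nonneg card_gt_0_iff)
  have finJ: "finite (\<Omega>1 \<times> \<Omega>2)" using fin1 fin2 by auto
  \<comment> \<open>transport J to nat labels\<close>
  obtain h where h: "bij_betw h {0..<card (\<Omega>1 \<times> \<Omega>2)} (\<Omega>1 \<times> \<Omega>2)"
    using ex_bij_betw_nat_finite[OF finJ] by blast
  define J' where "J' k = J (h k)" for k
  have eJ: "\<And>p. p \<in> \<Omega>1 \<times> \<Omega>2 \<Longrightarrow> effect S (J p)" and sJ: "(\<lambda>v. \<Sum>p\<in>\<Omega>1 \<times> \<Omega>2. J p v) = u"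
    using J unfolding measurement_def by auto
  have mJ': "measurement S u {0..<card (\<Omega>1 \<times> \<Omega>2)} J'"
    unfolding measurement_def
  proof (intro conjI ballI)
    fix k assume "k \<in> {0..<card (\<Omega>1 \<times> \<Omega>2)}"
    then show "effect S (J' k)" unfolding J'_def using eJ bij_betwE[OF h] by blast
  next
    show "(\<lambda>v. \<Sum>x\<in>{0..<card (\<Omega>1 \<times> \<Omega>2)}. J' x v) = u"
    proof
      fix v
      have "(\<Sum>k\<in>{0..<card (\<Omega>1 \<times> \<Omega>2)}. J (h k) v) = (\<Sum>p\<in>\<Omega>1 \<times> \<Omega>2. J p v)"
        by (rule sum.reindex_bij_betw[OF h])
      then show "(\<Sum>x\<in>{0..<card (\<Omega>1 \<times> \<Omega>2)}. J' x v) = u v"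
        unfolding J'_def using fun_cong[OF sJ, of v] by simp
    qed
  qed simp
  have dpJ': "decoding_power S {0..<card (\<Omega>1 \<times> \<Omega>2)} J' = decoding_power S (\<Omega>1 \<times> \<Omega>2) J"
    unfolding decoding_power_def J'_def by (rule sum.reindex_bij_betw[OF h])
  obtain C where C: "\<And>(\<Omega>::nat set) M. measurement S u \<Omega> M \<Longrightarrow> decoding_power S \<Omega> M \<le> C"
    using dp_bound[OF assms(1), where 'b=nat] by blast
  have bdd: "bdd_above ((\<lambda>p. decoding_power S (fst p) (snd p)) ` {(\<Omega>::nat set, M). measurement S u \<Omega> M})"
    by (rule bdd_aboveI2[of _ _ C]) (auto intro: C)
  have dpJ: "decoding_power S (\<Omega>1 \<times> \<Omega>2) J \<le> decoding_power_space S u"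
    unfolding decoding_power_space_def
    using cSUP_upper[OF _ bdd, of "({0..<card (\<Omega>1 \<times> \<Omega>2)}, J')"] mJ' dpJ' by simp
  have "decoding_power S (\<Omega>1 \<times> \<Omega>2) (harmonic \<Omega>1 M1 \<Omega>2 M2)
        \<le> (\<Sum>p\<in>\<Omega>1 \<times> \<Omega>2. (fnorm S (J p) + 1) / m)"
    unfolding decoding_power_def
  proof (rule sum_mono)
    fix p assume p: "p \<in> \<Omega>1 \<times> \<Omega>2"
    obtain x y where pxy: "p = (x, y)" and x: "x \<in> \<Omega>1" and y: "y \<in> \<Omega>2" using p by auto
    have "harmonic \<Omega>1 M1 \<Omega>2 M2 p = (\<lambda>v. (M1 x v + M2 y v) / m)"
      unfolding harmonic_def pxy m_def by simp
    then show "fnorm S (harmonic \<Omega>1 M1 \<Omega>2 M2 p) \<le> (fnorm S (J p) + 1) / m"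
      using pair_bound[OF Sne J u1 J1 J2 fin1 fin2 x y mpos] pxy by simp
  qed
  also have "\<dots> = (decoding_power S (\<Omega>1 \<times> \<Omega>2) J + real (card \<Omega>1) * real (card \<Omega>2)) / m"
    unfolding decoding_power_def
    by (simp add: sum_divide_distrib[symmetric] sum.distrib card_cartesian_product)
  also have "\<dots> \<le> (decoding_power_space S u + real (card \<Omega>1) * real (card \<Omega>2)) / m"
    using dpJ mpos by (simp add: divide_right_mono)
  finally show False using assms(4) unfolding m_def by linarith
qed

end
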